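(* Let $d>k\ge3$ and $a\ge1$ be integers with $d-a^k\ge1$. Let $X=X_\Sigma$ be the smooth projective toric $d$-fold whose fan has ray generators $x_1,\dots,x_d,y_1,y_2$ and primitive relations $x_1+\cdots+x_d=ay_1$ and $y_1+y_2=0$ (so $X\cong\mathbb{P}_{\mathbb{P}^{d-1}}(\mathcal{O}(a)\oplus\mathcal{O})$). Then: (1) if $k$ is odd, $\mathrm{ch}_k(X)$ is positive; (2) if $k$ is even, $\mathrm{ch}_k(X)$ is nef but not positive.
   Context: For a smooth complete toric variety $X$ of dimension $d$ with torus invariant prime divisors $D_1,\dots,D_n$, $\mathrm{ch}_k(X)=\frac{1}{k!}\sum_i D_i^k$. For $1\le k\le d$, $\mathrm{ch}_k(X)$ is nef (resp. positive) if $(\mathrm{ch}_k(X)\cdot Y)\ge0$ (resp. $>0$) for every $k$-dimensional torus invariant irreducible closed subvariety $Y\subset X$. A primitive collection is a set of ray generators not generating a cone of the fan while every proper subset does; its primitive relation expresses the sum of its elements as a positive integer combination of the generators of the smallest cone containing that sum. *)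

theory Defs
  imports Complex_Main "HOL-Library.Multiset"
begin

text \<open>A (smooth complete) fan of dimension d with n rays indexed by 0..n-1.
  v i j is the j-th coordinate (j < d) of the ray generator with index i;
  C is the set of cones, each given by the set of indices of its rays.\<close>

text \<open>Degree of degree-d monomials in the Chow ring
  A(X) = Z[D_1..D_n] / (Stanley--Reisner ideal + linear relations),
  normalised by deg(D_sigma) = 1 for every maximal cone sigma.  A monomial is
  a multiset of ray indices.  For a smooth complete fan there is exactly one
  such function.\<close>

definition toric_deg_axioms ::
  "nat \<Rightarrow> nat \<Rightarrow> (nat \<Rightarrow> nat \<Rightarrow> int) \<Rightarrow> nat set set \<Rightarrow> (nat multiset \<Rightarrow> int) \<Rightarrow> bool" where
  "toric_deg_axioms d n v C f \<longleftrightarrow>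
     (\<forall>M. (size M \<noteq> d \<or> \<not> set_mset M \<subseteq> {..<n}) \<longrightarrow> f M = 0) \<and>
     (\<forall>S\<in>C. card S = d \<longrightarrow> f (mset_set S) = 1) \<and>
     (\<forall>M. size M = d \<and> set_mset M \<subseteq> {..<n} \<and> set_mset M \<notin> C \<longrightarrow> f M = 0) \<and>
     (\<forall>(m::nat \<Rightarrow> int) N. size N + 1 = d \<and> set_mset N \<subseteq> {..<n} \<longrightarrow>
         (\<Sum>i<n. (\<Sum>j<d. m j * v i j) * f (add_mset i N)) = 0)"

definition toric_deg ::
  "nat \<Rightarrow> nat \<Rightarrow> (nat \<Rightarrow> nat \<Rightarrow> int) \<Rightarrow> nat set set \<Rightarrow> nat multiset \<Rightarrow> int" where
  "toric_deg d n v C = (THE f. toric_deg_axioms d n v C f)"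

text \<open>Intersection number (ch_k(X) . V(tau)) where V(tau) is the torus invariant
  subvariety of the cone tau; for a smooth fan [V(tau)] = prod_{j in tau} D_j,
  and ch_k(X) = (1/k!) sum_i D_i^k.\<close>

definition ch_dot ::
  "nat \<Rightarrow> nat \<Rightarrow> (nat \<Rightarrow> nat \<Rightarrow> int) \<Rightarrow> nat set set \<Rightarrow> nat \<Rightarrow> nat set \<Rightarrow> real" where
  "ch_dot d n v C k \<tau> =
     (1 / fact k) * (\<Sum>i<n. real_of_int (toric_deg d n v C (replicate_mset k i + mset_set \<tau>)))"

text \<open>k-dimensional torus invariant irreducible closed subvarieties are the
  V(tau) for cones tau of dimension d - k.\<close>

definition ch_nef :: "nat \<Rightarrow> nat \<Rightarrow> (nat \<Rightarrow> nat \<Rightarrow> int) \<Rightarrow> nat set set \<Rightarrow> nat \<Rightarrow> bool" where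
  "ch_nef d n v C k \<longleftrightarrow> (\<forall>\<tau>\<in>C. card \<tau> = d - k \<longrightarrow> ch_dot d n v C k \<tau> \<ge> 0)"

definition ch_positive :: "nat \<Rightarrow> nat \<Rightarrow> (nat \<Rightarrow> nat \<Rightarrow> int) \<Rightarrow> nat set set \<Rightarrow> nat \<Rightarrow> bool" where
  "ch_positive d n v C k \<longleftrightarrow> (\<forall>\<tau>\<in>C. card \<tau> = d - k \<longrightarrow> ch_dot d n v C k \<tau> > 0)"

text \<open>Ray indices: 0..d-1 are x_1..x_d,
  d is y_1, d+1 is y_2.  Generators: x_i = e_i (i < d), x_d = -(e_1+..+e_{d-1}) + a e_d,
  y_1 = e_d, y_2 = -e_d; thus x_1+..+x_d = a y_1 and y_1 + y_2 = 0.\<close>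

definition PE_ray :: "nat \<Rightarrow> nat \<Rightarrow> nat \<Rightarrow> nat \<Rightarrow> int" where
  "PE_ray d a i j =
     (if i + 1 < d then (if j = i then 1 else 0)
      else if i + 1 = d then (if j + 1 < d then -1 else if j + 1 = d then int a else 0)
      else if i = d then (if j + 1 = d then 1 else 0)
      else if i = d + 1 then (if j + 1 = d then -1 else 0)
      else 0)"

definition PE_cones :: "nat \<Rightarrow> nat set set" where
  "PE_cones d = {S. S \<subseteq> {..<d+2} \<and> \<not> {..<d} \<subseteq> S \<and> \<not> {d, d+1} \<subseteq> S}"

end

theory Submission
  imports Defs
begin

lemma ax4:
  assumes "toric_deg_axioms d n v C f" "size N + 1 = d" "set_mset N \<subseteq> {..<n}"
  shows "(\<Sum>i<n. (\<Sum>j<d. m j * v i j) * f (add_mset i N)) = 0"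
  using assms by (simp add: toric_deg_axioms_def)

lemma ray1: "j + 1 < d \<Longrightarrow> PE_ray d a i j = (if i = j then 1 else 0) - (if i = d - 1 then 1 else 0)"
  by (auto simp: PE_ray_def)

lemma ray2: "1 \<le> d \<Longrightarrow> PE_ray d a i (d-1) = (if i = d - 1 then int a else 0) + (if i = d then 1 else 0) - (if i = d + 1 then 1 else 0)"
  by (auto simp: PE_ray_def)

lemma rel1:
  assumes ax: "toric_deg_axioms d (d+2) (PE_ray d a) C f" and N: "size N + 1 = d" "set_mset N \<subseteq> {..<d+2}"
    and j: "j + 1 < d"
  shows "f (add_mset j N) = f (add_mset (d-1) N)"
proof -
  have "(\<Sum>i<d+2. (\<Sum>j'<d. (if j' = j then 1 else 0) * PE_ray d a i j') * f (add_mset i N)) = 0"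
    by (rule ax4[OF ax N])
  moreover have "\<And>i. (\<Sum>j'<d. (if j' = j then 1 else 0) * PE_ray d a i j') = PE_ray d a i j"
    using j by (subst sum.cong[OF refl, where h="\<lambda>j'. if j' = j then PE_ray d a i j else 0"]) auto
  ultimately have "(\<Sum>i<d+2. PE_ray d a i j * f (add_mset i N)) = 0" by (simp only:)
  moreover have "\<And>i. PE_ray d a i j * f (add_mset i N) = (if i = j then f (add_mset j N) else 0) - (if i = d - 1 then f (add_mset (d-1) N) else 0)"
    using j by (simp add: ray1)
  ultimately have "(\<Sum>i<d+2. (if i = j then f (add_mset j N) else 0)) - (\<Sum>i<d+2. (if i = d - 1 then f (add_mset (d-1) N) else 0)) = 0"
    by (simp only: sum_subtractf)
  moreover have h: "d - 1 < d + 2" "j < d + 2" using j by auto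
  ultimately show ?thesis by (simp only: sum.delta finite_lessThan lessThan_iff h if_True)
qed

lemma rel2:
  assumes ax: "toric_deg_axioms d (d+2) (PE_ray d a) C f" and N: "size N + 1 = d" "set_mset N \<subseteq> {..<d+2}"
  shows "int a * f (add_mset (d-1) N) + f (add_mset d N) - f (add_mset (d+1) N) = 0"
proof -
  have d: "1 \<le> d" using N by simp
  have "(\<Sum>i<d+2. (\<Sum>j'<d. (if j' = d-1 then 1 else 0) * PE_ray d a i j') * f (add_mset i N)) = 0"
    by (rule ax4[OF ax N])
  moreover have "\<And>i. (\<Sum>j'<d. (if j' = d-1 then 1 else 0) * PE_ray d a i j') = PE_ray d a i (d-1)"
    using d by (subst sum.cong[OF refl, where h="\<lambda>j'. if j' = d-1 then PE_ray d a i (d-1) else 0"]) auto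
  ultimately have "(\<Sum>i<d+2. PE_ray d a i (d-1) * f (add_mset i N)) = 0" by (simp only:)
  moreover have "\<And>i. PE_ray d a i (d-1) * f (add_mset i N) = (if i = d-1 then int a * f (add_mset (d-1) N) else 0) + (if i = d then f (add_mset d N) else 0)
      - (if i = d + 1 then f (add_mset (d+1) N) else 0)"
    by (simp only: ray2[OF d]) (simp add: algebra_simps)
  ultimately have "(\<Sum>i<d+2. (if i = d-1 then int a * f (add_mset (d-1) N) else 0)) + (\<Sum>i<d+2. (if i = d then f (add_mset d N) else 0))
      - (\<Sum>i<d+2. (if i = d + 1 then f (add_mset (d+1) N) else 0)) = 0"
    by (simp only: sum_subtractf sum.distrib)
  moreover have h: "d - 1 < d + 2" "d < d + 2" "d + 1 < d + 2" by auto
  ultimately show ?thesis by (simp only: sum.delta finite_lessThan lessThan_iff h if_True)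
qed

definition Gv :: "nat \<Rightarrow> nat \<Rightarrow> nat \<Rightarrow> int" where
  "Gv a s t = (if 0 < s \<and> 0 < t then 0 else if 0 < s then (- int a) ^ (s - 1)
     else if 0 < t then int a ^ (t - 1) else 0)"

definition gdeg :: "nat \<Rightarrow> nat \<Rightarrow> nat multiset \<Rightarrow> int" where
  "gdeg d a M = (if size M = d \<and> set_mset M \<subseteq> {..<d+2} then Gv a (count M d) (count M (d+1)) else 0)"

lemma Gv_rel: "int a * Gv a s t + Gv a (Suc s) t - Gv a s (Suc t) = 0"
proof (cases s)
  case 0
  then show ?thesis by (cases t) (auto simp: Gv_def)
next
  case (Suc s')
  then show ?thesis by (cases t) (auto simp: Gv_def)
qed

lemma card_set_mset_le: "card (set_mset M) \<le> size M"
  by (induction M) (auto simp: card_insert_if)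

lemma sum_ray: "j < d \<Longrightarrow> (\<Sum>i<d. PE_ray d a i j) = (if j = d - 1 then int a else 0)"
proof -
  assume j: "j < d"
  have "(\<Sum>i<d. PE_ray d a i j) = (\<Sum>i<d. (if j + 1 < d then (if i = j then 1 else 0) - (if i = d - 1 then 1 else 0) else (if i = d - 1 then int a else 0)))"
  proof (rule sum.cong)
    fix i assume "i \<in> {..<d}"
    then show "PE_ray d a i j = (if j + 1 < d then (if i = j then 1 else 0) - (if i = d - 1 then 1 else 0) else (if i = d - 1 then int a else 0))"
      using j by (auto simp: PE_ray_def)
  qed simp
  also have "\<dots> = (if j = d - 1 then int a else 0)"
  proof (cases "j + 1 < d")
    case True
    then have "j \<noteq> d - 1" by arith
    then show ?thesis using True by (simp add: sum_subtractf)
  next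
    case False
    then have "j = d - 1" using j by arith
    then show ?thesis using False j by simp
  qed
  finally show ?thesis .
qed

lemma gdeg_ax: assumes d: "1 \<le> d" shows "toric_deg_axioms d (d+2) (PE_ray d a) (PE_cones d) (gdeg d a)"
  unfolding toric_deg_axioms_def
proof (intro conjI allI impI ballI)
  fix M :: "nat multiset" assume "size M \<noteq> d \<or> \<not> set_mset M \<subseteq> {..<d + 2}"
  then show "gdeg d a M = 0" by (auto simp: gdeg_def)
next
  fix S assume S: "S \<in> PE_cones d" "card S = d"
  have fin: "finite S" using S by (auto simp: PE_cones_def intro: finite_subset)
  have nb: "\<not> (d \<in> S \<and> d + 1 \<in> S)" using S by (auto simp: PE_cones_def)
  have one: "d \<in> S \<or> d + 1 \<in> S"
  proof (rule ccontr)
    assume "\<not> (d \<in> S \<or> d + 1 \<in> S)"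
    then have "S \<subseteq> {..<d}" using S by (auto simp: PE_cones_def less_Suc_eq)
    then have "S = {..<d}" using S by (intro card_subset_eq) auto
    then show False using S by (auto simp: PE_cones_def)
  qed
  have rng: "S \<subseteq> {..<d+2}" using S by (auto simp: PE_cones_def)
  show "gdeg d a (mset_set S) = 1"
    using one nb fin rng S by (auto simp: gdeg_def Gv_def)
next
  fix M :: "nat multiset" assume M: "size M = d \<and> set_mset M \<subseteq> {..<d + 2} \<and> set_mset M \<notin> PE_cones d"
  then have c: "{..<d} \<subseteq> set_mset M \<or> {d, d+1} \<subseteq> set_mset M" by (auto simp: PE_cones_def)
  show "gdeg d a M = 0"
  proof (cases "{d, d+1} \<subseteq> set_mset M")
    case True then show ?thesis using M by (auto simp: gdeg_def Gv_def)
  next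
    case False
    then have sub: "{..<d} \<subseteq> set_mset M" using c by auto
    have "count M d = 0"
    proof (rule ccontr)
      assume "count M d \<noteq> 0"
      then have "insert d {..<d} \<subseteq> set_mset M" using sub by auto
      then have "card (insert d {..<d}) \<le> card (set_mset M)" by (intro card_mono) auto
      then show False using card_set_mset_le[of M] M by simp
    qed
    moreover have "count M (d+1) = 0"
    proof (rule ccontr)
      assume "count M (d+1) \<noteq> 0"
      then have "insert (d+1) {..<d} \<subseteq> set_mset M" using sub by auto
      then have "card (insert (d+1) {..<d}) \<le> card (set_mset M)" by (intro card_mono) auto
      then show False using card_set_mset_le[of M] M by simp
    qed
    ultimately show ?thesis by (simp add: gdeg_def Gv_def)
  qed
next
  fix m :: "nat \<Rightarrow> int" and N assume N: "size N + 1 = d \<and> set_mset N \<subseteq> {..<d + 2}"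
  define s where "s = count N d"
  define t where "t = count N (d+1)"
  define c where "c i = (\<Sum>j<d. m j * PE_ray d a i j)" for i
  have g: "gdeg d a (add_mset i N) = Gv a (s + (if i = d then 1 else 0)) (t + (if i = d + 1 then 1 else 0))"
    if "i < d + 2" for i
    using N that by (auto simp: gdeg_def s_def t_def)
  have cd: "c d = m (d-1)"
  proof -
    have "c d = (\<Sum>j<d. if j = d - 1 then m j else 0)"
      unfolding c_def by (rule sum.cong) (auto simp: PE_ray_def)
    then show ?thesis using d by simp
  qed
  have cd1: "c (d+1) = - m (d-1)"
  proof -
    have "c (d+1) = (\<Sum>j<d. if j = d - 1 then - m j else 0)"
      unfolding c_def by (rule sum.cong) (auto simp: PE_ray_def)
    then show ?thesis using d by simp
  qed
  have cs: "(\<Sum>i<d. c i) = m (d-1) * int a"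
  proof -
    have "(\<Sum>i<d. c i) = (\<Sum>j<d. m j * (\<Sum>i<d. PE_ray d a i j))"
      unfolding c_def sum_distrib_left by (rule sum.swap)
    also have "\<dots> = (\<Sum>j<d. (if j = d - 1 then m (d-1) * int a else 0))"
      by (rule sum.cong) (auto simp: sum_ray)
    also have "\<dots> = m (d-1) * int a" using d by simp
    finally show ?thesis .
  qed
  have set: "{..<d+2} = insert (d+1) (insert d {..<d})" by auto
  have "(\<Sum>i<d + 2. c i * gdeg d a (add_mset i N)) =
     (\<Sum>i<d. c i * Gv a s t) + c d * Gv a (Suc s) t + c (d+1) * Gv a s (Suc t)"
  proof -
    have "(\<Sum>i<d + 2. c i * gdeg d a (add_mset i N)) = (\<Sum>i\<in>insert (d+1) (insert d {..<d}). c i * gdeg d a (add_mset i N))"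
      by (simp only: set)
    also have "\<dots> = c (d+1) * gdeg d a (add_mset (d+1) N) + c d * gdeg d a (add_mset d N) + (\<Sum>i<d. c i * gdeg d a (add_mset i N))"
      by (simp add: add.assoc)
    also have "(\<Sum>i<d. c i * gdeg d a (add_mset i N)) = (\<Sum>i<d. c i * Gv a s t)"
      by (rule sum.cong) (auto simp: g)
    finally show ?thesis by (simp add: g)
  qed
  also have "\<dots> = m (d-1) * (int a * Gv a s t + Gv a (Suc s) t - Gv a s (Suc t))"
    unfolding sum_distrib_right[symmetric] cd cd1 cs by (simp add: algebra_simps)
  also have "\<dots> = 0" by (simp add: Gv_rel)
  finally show "(\<Sum>i<d + 2. (\<Sum>j<d. m j * PE_ray d a i j) * gdeg d a (add_mset i N)) = 0"
    by (simp add: c_def)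
qed


lemma uniq:
  assumes ax: "toric_deg_axioms d (d+2) (PE_ray d a) (PE_cones d) f" and d: "1 \<le> d"
  shows "f M = gdeg d a M"
proof -
  have axg: "toric_deg_axioms d (d+2) (PE_ray d a) (PE_cones d) (gdeg d a)" by (rule gdeg_ax[OF d])
  define h where "h M = f M - gdeg d a M" for M
  have swap: "h (add_mset j N) = h (add_mset (d-1) N)"
    if N: "size N + 1 = d" "set_mset N \<subseteq> {..<d+2}" and j: "j < d" for N j
  proof (cases "j + 1 < d")
    case True
    then show ?thesis unfolding h_def using rel1[OF ax N True] rel1[OF axg N True] by simp
  next
    case False
    then have "j = d - 1" using j by arith
    then show ?thesis by simp
  qed
  have r2: "int a * h (add_mset (d-1) N) + h (add_mset d N) - h (add_mset (d+1) N) = 0"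
    if N: "size N + 1 = d" "set_mset N \<subseteq> {..<d+2}" for N
    using rel2[OF ax N] rel2[OF axg N] unfolding h_def by (simp add: algebra_simps)
  have z1: "h M = 0" if "size M \<noteq> d \<or> \<not> set_mset M \<subseteq> {..<d+2}" for M
    using ax axg that unfolding h_def toric_deg_axioms_def by auto
  have z3: "h M = 0" if "size M = d" "set_mset M \<subseteq> {..<d+2}" "set_mset M \<notin> PE_cones d" for M
    using ax axg that unfolding h_def toric_deg_axioms_def by auto
  have z2: "h (mset_set S) = 0" if "S \<in> PE_cones d" "card S = d" for S
    using ax axg that unfolding h_def toric_deg_axioms_def by auto
  have "h M = 0"
  proof (induction "size M - card (set_mset M)" arbitrary: M rule: less_induct)
    case less
    show ?case
    proof (cases "size M = d \<and> set_mset M \<subseteq> {..<d+2} \<and> set_mset M \<in> PE_cones d")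
      case False
      then show ?thesis using z1 z3 by blast
    next
      case True
      then have sM: "size M = d" and rM: "set_mset M \<subseteq> {..<d+2}" and cM: "set_mset M \<in> PE_cones d" by auto
      show ?thesis
      proof (cases "\<forall>x. count M x \<le> 1")
        case True
        have eq: "M = mset_set (set_mset M)"
        proof (rule multiset_eqI)
          fix x show "count M x = count (mset_set (set_mset M)) x"
          proof (cases "x \<in># M")
            case xin: True
            then have "count M x \<noteq> 0" by (metis count_eq_zero_iff)
            then have "count M x = 1" using True[rule_format, of x] by linarith
            then show ?thesis using xin by (simp add: count_mset_set')
          next
            case False
            then show ?thesis by (simp add: count_mset_set' not_in_iff)
          qed
        qed
        then have "card (set_mset M) = d" using sM by (metis size_mset_set)
        then show ?thesis using z2[OF cM] eq by simp
      next
        case False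
        then obtain i where ci: "count M i \<ge> 2" by (metis not_le Suc_leI one_add_one plus_1_eq_Suc)
        define N where "N = M - {#i#}"
        have iM: "i \<in># M" using ci by (metis count_eq_zero_iff not_numeral_le_zero)
        have MN: "M = add_mset i N" unfolding N_def using iM by simp
        have "count N i \<noteq> 0" unfolding N_def using ci by simp
        then have iN: "i \<in># N" by (metis count_eq_zero_iff)
        have setN: "set_mset N = set_mset M" using MN iN by auto
        have sN: "size N + 1 = d" using sM MN by simp
        have rN: "set_mset N \<subseteq> {..<d+2}" using rM setN by simp
        have cardN: "card (set_mset N) \<le> size N" by (rule card_set_mset_le)
        have IH: "h (add_mset l N) = 0" if "l \<notin># N" for l
        proof (rule less.hyps)
          have "card (set_mset (add_mset l N)) = card (set_mset N) + 1" using that by simp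
          then show "size (add_mset l N) - card (set_mset (add_mset l N)) < size M - card (set_mset M)"
            using cardN sM sN setN by simp
        qed
        obtain j0 where j0: "j0 < d" "j0 \<notin># M" using cM by (auto simp: PE_cones_def)
        have hx: "h (add_mset (d-1) N) = 0"
          using swap[OF sN rN j0(1)] IH[of j0] j0 setN by simp
        have "i < d + 2" using iM rM by auto
        then consider "i < d" | "i = d" | "i = d + 1" by linarith
        then show ?thesis
        proof cases
          case 1
          then show ?thesis using swap[OF sN rN 1] hx MN by simp
        next
          case 2
          then have "d + 1 \<notin># N" using cM iM setN by (auto simp: PE_cones_def)
          then show ?thesis using IH[of "d+1"] r2[OF sN rN] hx MN 2 by simp
        next
          case 3
          then have "d \<notin># N" using cM iM setN by (auto simp: PE_cones_def)
          then show ?thesis using IH[of "d"] r2[OF sN rN] hx MN 3 by simp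
        qed
      qed
    qed
  qed
  then show ?thesis unfolding h_def by simp
qed

lemma toric_deg_eq: assumes d: "1 \<le> d" shows "toric_deg d (d+2) (PE_ray d a) (PE_cones d) = gdeg d a"
  unfolding toric_deg_def
  by (rule the_equality[where P="toric_deg_axioms d (d+2) (PE_ray d a) (PE_cones d)", OF gdeg_ax[OF d]]) (rule ext, erule uniq[OF _ d])


lemma chdot_val:
  assumes d: "1 \<le> d" and k: "1 \<le> k" "k \<le> d" and tau: "\<tau> \<in> PE_cones d" "card \<tau> = d - k"
  shows "ch_dot d (d+2) (PE_ray d a) (PE_cones d) k \<tau> = (1 / fact k) * real_of_int
     (if d \<in> \<tau> then int d + (- int a) ^ k else if d + 1 \<in> \<tau> then int d + int a ^ k
      else (- int a) ^ (k-1) + int a ^ (k-1))"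
proof -
  define s0 where "s0 = (if d \<in> \<tau> then 1 else 0::nat)"
  define t0 where "t0 = (if d + 1 \<in> \<tau> then 1 else 0::nat)"
  have fin: "finite \<tau>" and rng: "\<tau> \<subseteq> {..<d+2}" and nb: "\<not> {d, d+1} \<subseteq> \<tau>"
    using tau by (auto simp: PE_cones_def intro: finite_subset)
  have g: "gdeg d a (replicate_mset k i + mset_set \<tau>) =
      Gv a ((if i = d then k else 0) + s0) ((if i = d + 1 then k else 0) + t0)" if i: "i < d + 2" for i
  proof -
    have "size (replicate_mset k i + mset_set \<tau>) = d" using tau k by simp
    moreover have "set_mset (replicate_mset k i + mset_set \<tau>) \<subseteq> {..<d+2}"
      using rng fin i by auto
    ultimately show ?thesis using fin by (simp add: gdeg_def s0_def t0_def count_mset_set')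
  qed
  have set: "{..<d+2} = insert (d+1) (insert d {..<d})" by auto
  have "(\<Sum>i<d+2. real_of_int (toric_deg d (d + 2) (PE_ray d a) (PE_cones d) (replicate_mset k i + mset_set \<tau>)))
     = (\<Sum>i\<in>insert (d+1) (insert d {..<d}). real_of_int (gdeg d a (replicate_mset k i + mset_set \<tau>)))"
    by (simp only: toric_deg_eq[OF d] set)
  also have "\<dots> = real_of_int (Gv a s0 (k + t0)) + real_of_int (Gv a (k + s0) t0) + (\<Sum>i<d. real_of_int (gdeg d a (replicate_mset k i + mset_set \<tau>)))"
    by (simp add: add.assoc g)
  also have "(\<Sum>i<d. real_of_int (gdeg d a (replicate_mset k i + mset_set \<tau>))) = (\<Sum>i<d. real_of_int (Gv a s0 t0))"
    by (rule sum.cong) (auto simp: g)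
  finally have eq: "(\<Sum>i<d+2. real_of_int (toric_deg d (d + 2) (PE_ray d a) (PE_cones d) (replicate_mset k i + mset_set \<tau>)))
     = real_of_int (Gv a s0 (k + t0) + Gv a (k + s0) t0 + int d * Gv a s0 t0)" by simp
  have "Gv a s0 (k + t0) + Gv a (k + s0) t0 + int d * Gv a s0 t0 =
     (if d \<in> \<tau> then int d + (- int a) ^ k else if d + 1 \<in> \<tau> then int d + int a ^ k
      else (- int a) ^ (k-1) + int a ^ (k-1))"
    using nb k by (auto simp: Gv_def s0_def t0_def)
  then show ?thesis unfolding ch_dot_def eq by simp
qed

theorem proposition4p2:
  fixes d k a :: nat
  assumes "3 \<le> k" and "k < d" and "1 \<le> a" and "int d - int a ^ k \<ge> 1"
  shows "(odd k \<longrightarrow> ch_positive d (d + 2) (PE_ray d a) (PE_cones d) k) \<and>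
         (even k \<longrightarrow> ch_nef d (d + 2) (PE_ray d a) (PE_cones d) k \<and>
                     \<not> ch_positive d (d + 2) (PE_ray d a) (PE_cones d) k)"
proof -
  have d: "1 \<le> d" and k1: "1 \<le> k" and kd: "k \<le> d" using assms by auto
  have apos: "0 < int a" using assms by simp
  have pd: "0 < int d" using d by simp
  have V1: "0 < int d + (- int a) ^ k"
  proof (cases "even k")
    case True
    have "0 \<le> int a ^ k" by simp
    moreover have "(- int a) ^ k = int a ^ k" using True by simp
    ultimately show ?thesis using pd by linarith
  next
    case False
    then have "(- int a) ^ k = - (int a ^ k)" by simp
    then show ?thesis using assms(4) by linarith
  qed
  have "0 \<le> int a ^ k" by simp
  then have V2: "0 < int d + int a ^ k" using pd by linarith
  have V3o: "odd k \<Longrightarrow> 0 < (- int a) ^ (k-1) + int a ^ (k-1)"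
    using apos k1 by simp
  have V3e: "even k \<Longrightarrow> (- int a) ^ (k-1) + int a ^ (k-1) = 0"
    using k1 by simp
  have fk: "0 < (1 / fact k :: real)" by simp
  show ?thesis
  proof (intro conjI impI)
    assume o: "odd k"
    show "ch_positive d (d + 2) (PE_ray d a) (PE_cones d) k"
      unfolding ch_positive_def
    proof (intro ballI impI)
      fix \<tau> assume "\<tau> \<in> PE_cones d" "card \<tau> = d - k"
      then show "0 < ch_dot d (d + 2) (PE_ray d a) (PE_cones d) k \<tau>"
        using chdot_val[OF d k1 kd] V1 V2 V3o[OF o] fk by (simp add: mult_pos_pos)
    qed
  next
    assume e: "even k"
    show "ch_nef d (d + 2) (PE_ray d a) (PE_cones d) k"
      unfolding ch_nef_def
    proof (intro ballI impI)
      fix \<tau> assume "\<tau> \<in> PE_cones d" "card \<tau> = d - k"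
      then show "0 \<le> ch_dot d (d + 2) (PE_ray d a) (PE_cones d) k \<tau>"
        using chdot_val[OF d k1 kd] V1 V2 V3e[OF e] fk by simp
    qed
  next
    assume e: "even k"
    define \<tau> where "\<tau> = {..<d-k}"
    have w: "d - 1 \<in> {..<d}" "d - 1 \<notin> \<tau>" using assms by (auto simp: \<tau>_def)
    have t: "\<tau> \<in> PE_cones d" unfolding PE_cones_def
    proof (intro CollectI conjI)
      show "\<tau> \<subseteq> {..<d+2}" by (auto simp: \<tau>_def)
      show "\<not> {..<d} \<subseteq> \<tau>" using w by blast
      show "\<not> {d, d+1} \<subseteq> \<tau>" by (auto simp: \<tau>_def)
    qed
    have c: "card \<tau> = d - k" by (simp add: \<tau>_def)
    have nd: "d \<notin> \<tau>" "d + 1 \<notin> \<tau>" by (auto simp: \<tau>_def)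
    have "odd (k-1)" using e k1 by simp
    then have "ch_dot d (d + 2) (PE_ray d a) (PE_cones d) k \<tau> = 0"
      using chdot_val[OF d k1 kd t c, where a=a] V3e[OF e] \<open>odd (k-1)\<close> nd by simp
    then show "\<not> ch_positive d (d + 2) (PE_ray d a) (PE_cones d) k"
      unfolding ch_positive_def using t c by force
  qed
qed

end
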